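(* Let $p\in\mathcal M_1^+$. If $\limsup_{k\to\infty}\sqrt[k]{p_k}<1$, then all coefficients $a(p)_k=\frac{1}{k+1}\sum_{\ell\ge k}\binom{\ell}{k}p_\ell$ are finite and $a(p)\in X_{\alpha,\delta}$ with $\alpha=a(p)_1=\frac12 m=\frac12\sum_{k\ge0}k\,p_k$ and some $\delta$. Conversely, if $a(p)\in X_{\alpha,\delta}$ for some $\alpha,\delta$, then $\limsup_{k\to\infty}\sqrt[k]{p_k}<1$.
   Context: $\mathcal M_1^+$ is the set of probability measures on $\mathbb N_0$, identified with nonnegative sequences summing to $1$. For $0<\alpha\le\delta<\infty$, $X_{\alpha,\delta}$ is the set of real sequences $a=(a_k)_{k\ge0}$ with $a_0=1$, $a_1=\alpha$, $0\le a_k\le\delta^k$ for $k\ge2$. *)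

theory Defs
  imports "HOL-Analysis.Analysis"
begin

definition prob_seq :: "(nat \<Rightarrow> real) \<Rightarrow> bool" where
  "prob_seq p \<longleftrightarrow> (\<forall>k. 0 \<le> p k) \<and> p sums 1"

text \<open>The series defining a(p)_k, reindexed: sum over l >= k of (l choose k) p_l.\<close>
definition a_series :: "(nat \<Rightarrow> real) \<Rightarrow> nat \<Rightarrow> nat \<Rightarrow> real" where
  "a_series p k = (\<lambda>j. real ((j + k) choose k) * p (j + k))"

definition a_finite :: "(nat \<Rightarrow> real) \<Rightarrow> bool" where
  "a_finite p \<longleftrightarrow> (\<forall>k. summable (a_series p k))"

definition a_coeff :: "(nat \<Rightarrow> real) \<Rightarrow> nat \<Rightarrow> real" where
  "a_coeff p k = suminf (a_series p k) / real (k + 1)"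

definition in_X :: "real \<Rightarrow> real \<Rightarrow> (nat \<Rightarrow> real) \<Rightarrow> bool" where
  "in_X \<alpha> \<delta> a \<longleftrightarrow> 0 < \<alpha> \<and> \<alpha> \<le> \<delta> \<and> a 0 = 1 \<and> a 1 = \<alpha> \<and>
     (\<forall>k\<ge>2. 0 \<le> a k \<and> a k \<le> \<delta> ^ k)"

end

theory Submission
  imports Defs
begin

lemma term_le_suminf:
  fixes f :: "nat \<Rightarrow> real"
  assumes "summable f" "\<And>n. 0 \<le> f n"
  shows "f n \<le> suminf f"
  using sum_le_suminf[of f "{n}"] assms by auto

lemma binom_term_le1:
  fixes s t :: real
  assumes "0 \<le> s" "0 \<le> t" "s + t = 1"
  shows "real ((j + k) choose k) * s ^ k * t ^ j \<le> 1"
proof -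
  have "(s + t) ^ (j + k) = (\<Sum>i\<le>j + k. of_nat ((j + k) choose i) * s ^ i * t ^ (j + k - i))"
    by (rule binomial_ring)
  moreover have "of_nat ((j + k) choose k) * s ^ k * t ^ (j + k - k)
      \<le> (\<Sum>i\<le>j + k. of_nat ((j + k) choose i) * s ^ i * t ^ (j + k - i))"
    by (rule member_le_sum[where f="\<lambda>i. of_nat ((j + k) choose i) * s ^ i * t ^ (j + k - i)"])
       (use assms in auto)
  ultimately show ?thesis using assms by simp
qed

lemma suc_le_pow2: "real k + 1 \<le> 2 ^ k"
proof (induction k)
  case 0 then show ?case by simp
next
  case (Suc k)
  have "(1::real) \<le> 2 ^ k" by simp
  with Suc show ?case by simp
qed

lemma dir1:
  fixes p :: "nat \<Rightarrow> real"
  assumes P: "prob_seq p"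
    and L: "limsup (\<lambda>k. ereal (root k (p k))) < 1" and nz: "\<exists>k\<ge>1. p k \<noteq> 0"
  shows "a_finite p \<and> a_coeff p 1 = (\<Sum>k. real k * p k) / 2
                \<and> (\<exists>\<delta>. in_X ((\<Sum>k. real k * p k) / 2) \<delta> (a_coeff p))"
proof -
  have p0: "\<And>k. 0 \<le> p k" and ps: "p sums 1" using P unfolding prob_seq_def by auto
  have psum: "summable p" and p1: "suminf p = 1" using ps sums_iff by blast+
  have ple1: "p k \<le> 1" for k using term_le_suminf[OF psum p0, of k] p1 by simp
  define Lr where "Lr = limsup (\<lambda>k. ereal (root k (p k)))"
  define r where "r = (max 0 (real_of_ereal Lr) + 1) / 2"
  have r0: "0 < r" and r1: "r < 1"
  proof -
    have "Lr \<noteq> \<infinity>" using L Lr_def by auto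
    have "Lr < 1" using L Lr_def by simp
    hence "real_of_ereal Lr < 1"
      by (cases Lr) auto
    thus "0 < r" "r < 1" unfolding r_def by auto
  qed
  have "Lr < ereal r"
  proof (cases Lr)
    case (real x)
    have "Lr < 1" using L Lr_def by simp
    hence "x < 1" using real by simp
    then show ?thesis using real unfolding r_def by auto
  next
    case PInf then show ?thesis using L Lr_def by simp
  next
    case MInf then show ?thesis by simp
  qed
  hence "\<forall>\<^sub>F k in sequentially. ereal (root k (p k)) < ereal r"
    unfolding Lr_def by (rule Limsup_lessD)
  then obtain K where K: "\<And>k. k \<ge> K \<Longrightarrow> root k (p k) < r"
    unfolding eventually_sequentially by auto
  have pr: "p k \<le> r ^ k" if "k \<ge> Suc K" for k
  proof -
    have k0: "0 < k" using that by simp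
    have "root k (p k) < r" using K that by simp
    hence "root k (p k) ^ k \<le> r ^ k"
      using real_root_ge_zero[OF p0[of k]] by (intro power_mono) auto
    thus ?thesis using real_root_pow_pos2[OF k0 p0[of k]] by simp
  qed
  define C where "C = 1 / r ^ Suc K"
  have "r ^ Suc K \<le> 1" using r0 r1 by (intro power_le_one) auto
  hence C1: "1 \<le> C" unfolding C_def using r0 by simp
  have pC: "p l \<le> C * r ^ l" for l
  proof (cases "l \<ge> Suc K")
    case True
    have "r ^ l \<le> C * r ^ l" using C1 r0 by simp
    then show ?thesis using pr[OF True] by linarith
  next
    case False
    have "r ^ Suc K \<le> r ^ l" using False r0 r1 by (intro power_decreasing) auto
    hence "1 \<le> C * r ^ l" unfolding C_def using r0 by (simp add: field_simps)
    then show ?thesis using ple1[of l] by linarith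
  qed
  define t where "t = (1 + r) / 2"
  define s where "s = (1 - r) / 2"
  define q where "q = r / t"
  define D where "D = r / s"
  have t0: "0 < t" and s0: "0 < s" and st: "s + t = 1" using r0 r1 unfolding t_def s_def by (auto simp: field_simps)
  have q0: "0 \<le> q" and q1: "q < 1" using r0 r1 unfolding q_def t_def by (auto simp: field_simps)
  have D0: "0 \<le> D" unfolding D_def using r0 s0 by simp
  have ser_nn: "0 \<le> a_series p k j" for k j unfolding a_series_def using p0 by simp
  have ser_le: "a_series p k j \<le> C * D ^ k * q ^ j" for k j
  proof -
    have "a_series p k j \<le> real ((j + k) choose k) * (C * r ^ (j + k))"
      unfolding a_series_def by (intro mult_left_mono pC) auto
    also have "r ^ (j + k) = (D * s) ^ k * (q * t) ^ j"
      unfolding D_def q_def using s0 t0 by (simp add: power_add mult.commute)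
    also have "real ((j + k) choose k) * (C * ((D * s) ^ k * (q * t) ^ j))
        = (C * D ^ k * q ^ j) * (real ((j + k) choose k) * s ^ k * t ^ j)"
      by (simp add: power_mult_distrib algebra_simps)
    also have "\<dots> \<le> (C * D ^ k * q ^ j) * 1"
      using binom_term_le1[OF less_imp_le[OF s0] less_imp_le[OF t0] st, of j k] C1 D0 q0
      by (intro mult_left_mono) auto
    finally show ?thesis by simp
  qed
  have geo: "summable (\<lambda>j. C * D ^ k * q ^ j)" for k
    using q0 q1 by (intro summable_mult summable_geometric) auto
  have summ: "summable (a_series p k)" for k
    by (rule summable_comparison_test'[OF geo[of k]]) (use ser_nn ser_le in auto)
  have fin: "a_finite p" unfolding a_finite_def using summ by blast
  have sum_le: "suminf (a_series p k) \<le> C / (1 - q) * D ^ k" for k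
  proof -
    have "suminf (a_series p k) \<le> (\<Sum>j. C * D ^ k * q ^ j)"
      by (rule suminf_le[OF ser_le summ geo])
    also have "\<dots> = C * D ^ k * (1 / (1 - q))"
      using q0 q1 by (subst suminf_mult) (auto simp: suminf_geometric)
    finally show ?thesis by simp
  qed
  have s1: "a_series p 1 = (\<lambda>j. real (Suc j) * p (Suc j))"
    unfolding a_series_def by auto
  have smk: "summable (\<lambda>k. real k * p k)"
    using summ[of 1] unfolding s1 by (subst summable_Suc_iff[symmetric]) simp
  have a1: "a_coeff p 1 = (\<Sum>k. real k * p k) / 2"
    unfolding a_coeff_def s1 using suminf_split_head[OF smk] by simp
  have a0: "a_coeff p 0 = 1"
    unfolding a_coeff_def a_series_def using p1 by simp
  obtain k1 where k1: "k1 \<ge> 1" "p k1 \<noteq> 0" using nz by auto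
  have "0 < a_series p 1 (k1 - 1)"
    unfolding s1 using k1 p0[of k1] by (simp add: order_le_neq_trans)
  hence apos: "0 < a_coeff p 1"
    unfolding a_coeff_def using suminf_pos2[OF summ[of 1] ser_nn] by simp
  define M where "M = max 1 (C / (1 - q))"
  have M1: "1 \<le> M" unfolding M_def by simp
  define \<alpha> where "\<alpha> = (\<Sum>k. real k * p k) / 2"
  define \<delta> where "\<delta> = max \<alpha> (M * D)"
  have ak: "0 \<le> a_coeff p k \<and> a_coeff p k \<le> \<delta> ^ k" if "k \<ge> 2" for k
  proof -
    have nn: "0 \<le> suminf (a_series p k)" by (rule suminf_nonneg[OF summ ser_nn])
    have "a_coeff p k \<le> suminf (a_series p k)"
      unfolding a_coeff_def using nn mult_left_mono[of 1 "1 + real k" "suminf (a_series p k)"]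
      by (simp add: divide_le_eq)
    also have "\<dots> \<le> M * D ^ k"
      using sum_le[of k] D0 unfolding M_def
      by (meson max.cobounded2 mult_right_mono order_trans zero_le_power)
    also have "\<dots> \<le> M ^ k * D ^ k"
      using M1 that D0 by (intro mult_right_mono) (auto simp: power_increasing[of 1 k M, simplified])
    also have "\<dots> = (M * D) ^ k" by (simp add: power_mult_distrib)
    also have "\<dots> \<le> \<delta> ^ k" unfolding \<delta>_def using M1 D0 by (intro power_mono) auto
    finally show ?thesis using nn unfolding a_coeff_def by simp
  qed
  have "in_X \<alpha> \<delta> (a_coeff p)"
    unfolding in_X_def using a1 apos a0 ak unfolding \<alpha>_def \<delta>_def by auto
  then show ?thesis using fin a1 unfolding \<alpha>_def by blast
qed

lemma dir2:
  fixes p :: "nat \<Rightarrow> real"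
  assumes P: "prob_seq p" and fin: "a_finite p" and X: "in_X \<alpha> \<delta> (a_coeff p)"
  shows "limsup (\<lambda>k. ereal (root k (p k))) < 1"
proof -
  have p0: "\<And>k. 0 \<le> p k" using P unfolding prob_seq_def by auto
  have summ: "summable (a_series p k)" for k using fin unfolding a_finite_def by auto
  have ser_nn: "0 \<le> a_series p k j" for k j unfolding a_series_def using p0 by simp
  have d0: "0 < \<delta>" using X unfolding in_X_def by auto
  have abound: "a_coeff p k \<le> \<delta> ^ k" for k
  proof -
    consider "k = 0" | "k = 1" | "k \<ge> 2" by linarith
    then show ?thesis using X unfolding in_X_def by cases auto
  qed
  define N where "N = nat \<lceil>4 * \<delta>\<rceil> + 1"
  have N1: "N \<ge> 1" unfolding N_def by simp
  have N4: "4 * \<delta> \<le> real N" unfolding N_def by linarith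
  have pb: "p l \<le> 2 powr (1 - real l / real N)" for l
  proof -
    define k where "k = l div N"
    have kl: "k \<le> l" unfolding k_def by simp
    have kN: "k * N \<le> l" unfolding k_def by (simp add: mult.commute)
    have lk: "l < N * (k + 1)"
    proof -
      have "l mod N < N" using N1 by simp
      moreover have "N * k + l mod N = l" unfolding k_def by simp
      ultimately show ?thesis by (simp add: algebra_simps)
    qed
    have E: "a_series p k (l - k) = real (l choose k) * p l"
      unfolding a_series_def using kl by simp
    have "real (l choose k) * p l \<le> suminf (a_series p k)"
      using term_le_suminf[OF summ ser_nn, of k "l - k"] E by simp
    also have "\<dots> = real (k + 1) * a_coeff p k" unfolding a_coeff_def by simp
    also have "\<dots> \<le> real (k + 1) * \<delta> ^ k" by (intro mult_left_mono abound) auto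
    finally have B: "real (l choose k) * p l \<le> real (k + 1) * \<delta> ^ k" by simp
    have NB: "real N ^ k \<le> real (l choose k)"
    proof (cases "k = 0")
      case True then show ?thesis by simp
    next
      case False
      have "real N \<le> real l / real k" using kN False
        by (simp add: field_simps of_nat_mult[symmetric] del: of_nat_mult)
      hence "real N ^ k \<le> (real l / real k) ^ k" by (intro power_mono) auto
      also have "\<dots> \<le> real (l choose k)" by (rule binomial_ge_n_over_k_pow_k[OF kl])
      finally show ?thesis .
    qed
    have "real N ^ k * p l \<le> real (k + 1) * \<delta> ^ k"
      using B NB p0[of l] by (meson mult_right_mono order_trans)
    also have "\<dots> \<le> real (k + 1) * (real N / 4) ^ k"
      using N4 d0 by (intro mult_left_mono power_mono) auto
    finally have "real N ^ k * p l \<le> real (k + 1) * (real N / 4) ^ k" .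
    also have "real (k + 1) * (real N / 4) ^ k = real N ^ k * (real (k + 1) * (1 / 4) ^ k)"
      by (simp add: power_divide)
    finally have H: "real N ^ k * p l \<le> real N ^ k * (real (k + 1) * (1 / 4) ^ k)" .
    have "0 < real N ^ k" using N1 by simp
    hence "p l \<le> real (k + 1) * (1 / 4) ^ k"
      using H mult_le_cancel_left_pos by blast
    also have "real (k + 1) * (1 / 4) ^ k = (real k + 1) / 2 ^ k * (1 / 2) ^ k"
      by (simp add: power_divide field_simps flip: power_mult_distrib)
    also have "\<dots> \<le> 1 * (1 / 2) ^ k"
      using suc_le_pow2[of k] by (intro mult_right_mono) auto
    also have "\<dots> = 2 powr (- real k)" by (simp add: powr_minus powr_realpow power_one_over inverse_eq_divide)
    also have "\<dots> \<le> 2 powr (1 - real l / real N)"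
    proof -
      have "real l < real N * (real k + 1)" using lk by (metis of_nat_1 of_nat_add of_nat_less_iff of_nat_mult)
      hence "real l / real N < real k + 1" using N1 by (simp add: field_simps)
      thus ?thesis by (intro powr_mono) auto
    qed
    finally show ?thesis .
  qed
  define g where "g = (\<lambda>l::nat. 2 powr (1 / real l - 1 / real N))"
  have ev: "\<forall>\<^sub>F l in sequentially. ereal (root l (p l)) \<le> ereal (g l)"
    unfolding eventually_sequentially
  proof (intro exI[of _ 1] allI impI)
    fix l :: nat assume l1: "l \<ge> 1"
    have "root l (p l) \<le> root l (2 powr (1 - real l / real N))"
      using l1 pb[of l] by (subst real_root_le_iff) auto
    also have "\<dots> = 2 powr ((1 - real l / real N) * (1 / real l))"
      using l1 by (simp add: root_powr_inverse powr_powr)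
    also have "(1 - real l / real N) * (1 / real l) = 1 / real l - 1 / real N"
      using l1 N1 by (simp add: field_simps)
    finally show "ereal (root l (p l)) \<le> ereal (g l)" unfolding g_def by simp
  qed
  have "(\<lambda>x. 1 / real x - 1 / real N) \<longlonglongrightarrow> 0 - 1 / real N"
    by (intro tendsto_diff lim_inverse_n' tendsto_const)
  hence "g \<longlonglongrightarrow> 2 powr (0 - 1 / real N)" unfolding g_def
    by (intro tendsto_powr tendsto_const) auto
  hence "(\<lambda>l. ereal (g l)) \<longlonglongrightarrow> ereal (2 powr (0 - 1 / real N))"
    by (rule tendsto_ereal)
  hence lg: "limsup (\<lambda>l. ereal (g l)) = ereal (2 powr (0 - 1 / real N))"
    by (intro lim_imp_Limsup) auto
  have "2 powr (0 - 1 / real N) < 1" using N1 by (simp add: powr_less_one)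
  hence "limsup (\<lambda>l. ereal (g l)) < 1" unfolding lg by simp
  moreover have "limsup (\<lambda>k. ereal (root k (p k))) \<le> limsup (\<lambda>l. ereal (g l))"
    by (rule Limsup_mono[OF ev])
  ultimately show ?thesis by order
qed

theorem proposition6:
  fixes p :: "nat \<Rightarrow> real"
  assumes "prob_seq p"
  shows "(limsup (\<lambda>k. ereal (root k (p k))) < 1 \<and> (\<exists>k\<ge>1. p k \<noteq> 0)
            \<longrightarrow> a_finite p
                \<and> a_coeff p 1 = (\<Sum>k. real k * p k) / 2
                \<and> (\<exists>\<delta>. in_X ((\<Sum>k. real k * p k) / 2) \<delta> (a_coeff p)))
       \<and> ((\<exists>\<alpha> \<delta>. a_finite p \<and> in_X \<alpha> \<delta> (a_coeff p))
            \<longrightarrow> limsup (\<lambda>k. ereal (root k (p k))) < 1)"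
  using dir1[OF assms] dir2[OF assms] by blast

end
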